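(* For every integer $n\ge0$, $$J\mathcal{G}_{n+2}^{(3)}-4J\mathcal{G}_{n}^{(3)}=-\frac{1}{7}\left[X_{n}(5\mathbf{A}+\mathbf{B})+X_{n+1}(\mathbf{A}-4\mathbf{B})\right]$$ and $$K\mathcal{G}_{n+2}^{(3)}-4K\mathcal{G}_{n}^{(3)}=-X_{n}(5\mathbf{C}+\mathbf{D})-X_{n+1}(\mathbf{C}-4\mathbf{D}),$$ where $\mathbf{A}=1+2\mathbf{e}_1-3\mathbf{e}_2+\mathbf{e}_3$, $\mathbf{B}=2-3\mathbf{e}_1+\mathbf{e}_2+2\mathbf{e}_3$, $\mathbf{C}=1-2\mathbf{e}_1+\mathbf{e}_2+\mathbf{e}_3$, $\mathbf{D}=-2+\mathbf{e}_1+\mathbf{e}_2-2\mathbf{e}_3$.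
   Context: Fix real numbers $\lambda_1,\lambda_2,\lambda_3$. The algebra $\mathbb{H}_{\lambda_1,\lambda_2,\lambda_3}$ of 3-parameter generalized quaternions is the real associative algebra of elements $\psi_0+\psi_1\mathbf{e}_1+\psi_2\mathbf{e}_2+\psi_3\mathbf{e}_3$ ($\psi_i\in\mathbb{R}$) with $\mathbf{e}_1^2=-\lambda_1\lambda_2$, $\mathbf{e}_2^2=-\lambda_1\lambda_3$, $\mathbf{e}_3^2=-\lambda_2\lambda_3$, $\mathbf{e}_1\mathbf{e}_2=-\mathbf{e}_2\mathbf{e}_1=\lambda_1\mathbf{e}_3$, $\mathbf{e}_1\mathbf{e}_3=-\mathbf{e}_3\mathbf{e}_1=-\lambda_2\mathbf{e}_2$, $\mathbf{e}_2\mathbf{e}_3=-\mathbf{e}_3\mathbf{e}_2=\lambda_3\mathbf{e}_1$. The third-order Jacobsthal numbers are $J_0^{(3)}=0$, $J_1^{(3)}=J_2^{(3)}=1$, $J_n^{(3)}=J_{n-1}^{(3)}+J_{n-2}^{(3)}+2J_{n-3}^{(3)}$ for $n\ge3$; the modified third-order Jacobsthal numbers are $K_0^{(3)}=3$, $K_1^{(3)}=1$, $K_2^{(3)}=3$, $K_n^{(3)}=K_{n-1}^{(3)}+K_{n-2}^{(3)}+2K_{n-3}^{(3)}$ for $n\ge3$. For $n\ge0$ define $J\mathcal{G}_n^{(3)}=J_n^{(3)}+J_{n+1}^{(3)}\mathbf{e}_1+J_{n+2}^{(3)}\mathbf{e}_2+J_{n+3}^{(3)}\mathbf{e}_3$ and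 $K\mathcal{G}_n^{(3)}=K_n^{(3)}+K_{n+1}^{(3)}\mathbf{e}_1+K_{n+2}^{(3)}\mathbf{e}_2+K_{n+3}^{(3)}\mathbf{e}_3$. The integer sequence $X_n$ is defined by $X_n=0,1,-1$ according as $n\equiv0,1,2\pmod 3$. *)

theory Defs
  imports Main Complex_Main
begin

text \<open>Elements psi0 + psi1 e1 + psi2 e2 + psi3 e3 of the 3-parameter generalized
quaternions H_{l1,l2,l3}, represented by their four real coordinates.\<close>
datatype gq = GQ real real real real

fun gq_add :: "gq \<Rightarrow> gq \<Rightarrow> gq" where
  "gq_add (GQ a0 a1 a2 a3) (GQ b0 b1 b2 b3) = GQ (a0+b0) (a1+b1) (a2+b2) (a3+b3)"

fun gq_sub :: "gq \<Rightarrow> gq \<Rightarrow> gq" where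
  "gq_sub (GQ a0 a1 a2 a3) (GQ b0 b1 b2 b3) = GQ (a0-b0) (a1-b1) (a2-b2) (a3-b3)"

fun gq_scale :: "real \<Rightarrow> gq \<Rightarrow> gq" where
  "gq_scale c (GQ a0 a1 a2 a3) = GQ (c*a0) (c*a1) (c*a2) (c*a3)"

fun gq_mult :: "real \<Rightarrow> real \<Rightarrow> real \<Rightarrow> gq \<Rightarrow> gq \<Rightarrow> gq" where
  "gq_mult l1 l2 l3 (GQ a0 a1 a2 a3) (GQ b0 b1 b2 b3) =
     GQ (a0*b0 - l1*l2*a1*b1 - l1*l3*a2*b2 - l2*l3*a3*b3)
        (a0*b1 + a1*b0 + l3*(a2*b3 - a3*b2))
        (a0*b2 + a2*b0 - l2*(a1*b3 - a3*b1))
        (a0*b3 + a3*b0 + l1*(a1*b2 - a2*b1))"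

fun Jac3 :: "nat \<Rightarrow> int" where
  "Jac3 0 = 0"
| "Jac3 (Suc 0) = 1"
| "Jac3 (Suc (Suc 0)) = 1"
| "Jac3 (Suc (Suc (Suc n))) = Jac3 (Suc (Suc n)) + Jac3 (Suc n) + 2 * Jac3 n"

fun KJac3 :: "nat \<Rightarrow> int" where
  "KJac3 0 = 3"
| "KJac3 (Suc 0) = 1"
| "KJac3 (Suc (Suc 0)) = 3"
| "KJac3 (Suc (Suc (Suc n))) = KJac3 (Suc (Suc n)) + KJac3 (Suc n) + 2 * KJac3 n"

definition JG :: "nat \<Rightarrow> gq" where
  "JG n = GQ (of_int (Jac3 n)) (of_int (Jac3 (n+1))) (of_int (Jac3 (n+2))) (of_int (Jac3 (n+3)))"

definition KG :: "nat \<Rightarrow> gq" where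
  "KG n = GQ (of_int (KJac3 n)) (of_int (KJac3 (n+1))) (of_int (KJac3 (n+2))) (of_int (KJac3 (n+3)))"

definition Xs :: "nat \<Rightarrow> int" where
  "Xs n = (if n mod 3 = 0 then 0 else if n mod 3 = 1 then 1 else -1)"

definition gqA :: gq where "gqA = GQ 1 2 (-3) 1"
definition gqB :: gq where "gqB = GQ 2 (-3) 1 2"
definition gqC :: gq where "gqC = GQ 1 (-2) 1 1"
definition gqD :: gq where "gqD = GQ (-2) 1 1 (-2)"

end

theory Submission
  imports Defs
begin

lemma J3rec: "a = n+3 \<Longrightarrow> b = n+2 \<Longrightarrow> c = n+1 \<Longrightarrow> Jac3 a = Jac3 b + Jac3 c + 2 * Jac3 n"
  by (simp add: numeral_eq_Suc)

lemma K3rec: "a = n+3 \<Longrightarrow> b = n+2 \<Longrightarrow> c = n+1 \<Longrightarrow> KJac3 a = KJac3 b + KJac3 c + 2 * KJac3 n"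
  by (simp add: numeral_eq_Suc)

lemma dJk: "Jac3 (3*k+2) - 4 * Jac3 (3*k) = 1 \<and> Jac3 (3*k+1+2) - 4 * Jac3 (3*k+1) = -2
   \<and> Jac3 (3*k+2+2) - 4 * Jac3 (3*k+2) = 1"
proof (induction k)
  case 0
  then show ?case by (simp add: numeral_eq_Suc)
next
  case (Suc k)
  have e1: "Jac3 (3*Suc k+2) = Jac3 (3*k+2+2) + Jac3 (3*k+1+2) + 2 * Jac3 (3*k+2)"
    by (rule J3rec) simp_all
  have e2: "Jac3 (3*Suc k+1+2) = Jac3 (3*Suc k+2) + Jac3 (3*k+2+2) + 2 * Jac3 (3*k+1+2)"
    by (rule J3rec) simp_all
  have e3: "Jac3 (3*Suc k+2+2) = Jac3 (3*Suc k+1+2) + Jac3 (3*Suc k+2) + 2 * Jac3 (3*k+2+2)"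
    by (rule J3rec) simp_all
  have e4: "Jac3 (3*k+2+2) = Jac3 (3*k+1+2) + Jac3 (3*k+2) + 2 * Jac3 (3*k+1)"
    by (rule J3rec) simp_all
  have e5: "Jac3 (3*k+1+2) = Jac3 (3*k+2) + Jac3 (3*k+1) + 2 * Jac3 (3*k)"
    by (rule J3rec) simp_all
  have f1: "Jac3 (3*Suc k) = Jac3 (3*k+1+2)" by (rule arg_cong[where f=Jac3]) simp
  have f2: "Jac3 (3*Suc k+1) = Jac3 (3*k+2+2)" by (rule arg_cong[where f=Jac3]) simp
  have f3: "Jac3 (3*Suc k+2) = Jac3 (3*Suc k+2)" by simp
  show ?case using Suc.IH e1 e2 e3 e4 e5 f1 f2 by linarith
qed

lemma dKk: "KJac3 (3*k+2) - 4 * KJac3 (3*k) = -9 \<and> KJac3 (3*k+1+2) - 4 * KJac3 (3*k+1) = 6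
   \<and> KJac3 (3*k+2+2) - 4 * KJac3 (3*k+2) = 3"
proof (induction k)
  case 0
  then show ?case by (simp add: numeral_eq_Suc)
next
  case (Suc k)
  have e1: "KJac3 (3*Suc k+2) = KJac3 (3*k+2+2) + KJac3 (3*k+1+2) + 2 * KJac3 (3*k+2)"
    by (rule K3rec) simp_all
  have e2: "KJac3 (3*Suc k+1+2) = KJac3 (3*Suc k+2) + KJac3 (3*k+2+2) + 2 * KJac3 (3*k+1+2)"
    by (rule K3rec) simp_all
  have e3: "KJac3 (3*Suc k+2+2) = KJac3 (3*Suc k+1+2) + KJac3 (3*Suc k+2) + 2 * KJac3 (3*k+2+2)"
    by (rule K3rec) simp_all
  have e4: "KJac3 (3*k+2+2) = KJac3 (3*k+1+2) + KJac3 (3*k+2) + 2 * KJac3 (3*k+1)"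
    by (rule K3rec) simp_all
  have e5: "KJac3 (3*k+1+2) = KJac3 (3*k+2) + KJac3 (3*k+1) + 2 * KJac3 (3*k)"
    by (rule K3rec) simp_all
  have f1: "KJac3 (3*Suc k) = KJac3 (3*k+1+2)" by (rule arg_cong[where f=KJac3]) simp
  have f2: "KJac3 (3*Suc k+1) = KJac3 (3*k+2+2)" by (rule arg_cong[where f=KJac3]) simp
  show ?case using Suc.IH e1 e2 e3 e4 e5 f1 f2 by linarith
qed


definition cJ :: "nat \<Rightarrow> real" where
  "cJ n = (if n mod 3 = 0 then 1 else if n mod 3 = 1 then -2 else 1)"
definition cK :: "nat \<Rightarrow> real" where
  "cK n = (if n mod 3 = 0 then -9 else if n mod 3 = 1 then 6 else 3)"

lemma dJ: "real_of_int (Jac3 (n+2)) - 4 * real_of_int (Jac3 n) = cJ n"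
proof -
  define k where "k = n div 3"
  have "n mod 3 = 0 \<or> n mod 3 = 1 \<or> n mod 3 = 2" by auto
  moreover have "n = 3*k + n mod 3" unfolding k_def by simp
  ultimately consider "n = 3*k" "n mod 3 = 0" | "n = 3*k+1" "n mod 3 = 1" | "n = 3*k+2" "n mod 3 = 2"
    by auto
  then have "Jac3 (n+2) - 4 * Jac3 n = (if n mod 3 = 0 then 1 else if n mod 3 = 1 then -2 else 1)"
    using dJk[of k] by cases simp_all
  then show ?thesis unfolding cJ_def by (simp split: if_splits)
qed

lemma dK: "real_of_int (KJac3 (n+2)) - 4 * real_of_int (KJac3 n) = cK n"
proof -
  define k where "k = n div 3"
  have "n mod 3 = 0 \<or> n mod 3 = 1 \<or> n mod 3 = 2" by auto
  moreover have "n = 3*k + n mod 3" unfolding k_def by simp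
  ultimately consider "n = 3*k" "n mod 3 = 0" | "n = 3*k+1" "n mod 3 = 1" | "n = 3*k+2" "n mod 3 = 2"
    by auto
  then have "KJac3 (n+2) - 4 * KJac3 n = (if n mod 3 = 0 then -9 else if n mod 3 = 1 then 6 else 3)"
    using dKk[of k] by cases simp_all
  then show ?thesis unfolding cK_def by (simp split: if_splits)
qed

lemma modk: "((n::nat)+k) mod 3 = (n mod 3 + k) mod 3"
  by (simp add: mod_add_left_eq)

theorem theorem4p3:
  fixes n :: nat
  shows "gq_sub (JG (n+2)) (gq_scale 4 (JG n)) =
           gq_scale (-1/7)
             (gq_add (gq_scale (of_int (Xs n)) (gq_add (gq_scale 5 gqA) gqB))
                     (gq_scale (of_int (Xs (n+1))) (gq_sub gqA (gq_scale 4 gqB)))) \<and>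
         gq_sub (KG (n+2)) (gq_scale 4 (KG n)) =
           gq_sub (gq_scale (- of_int (Xs n)) (gq_add (gq_scale 5 gqC) gqD))
                  (gq_scale (of_int (Xs (n+1))) (gq_sub gqC (gq_scale 4 gqD)))"
proof -
  define j0 where "j0 = real_of_int (Jac3 n)"
  define j1 where "j1 = real_of_int (Jac3 (n+1))"
  define j2 where "j2 = real_of_int (Jac3 (n+2))"
  define j3 where "j3 = real_of_int (Jac3 (n+3))"
  define j4 where "j4 = real_of_int (Jac3 (n+2+2))"
  define j5 where "j5 = real_of_int (Jac3 (n+2+3))"
  have JGn: "JG n = GQ j0 j1 j2 j3" unfolding JG_def j0_def j1_def j2_def j3_def by (rule refl)
  have JGn2: "JG (n+2) = GQ j2 j3 j4 j5" unfolding JG_def j2_def j3_def j4_def j5_def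
    by (intro arg_cong2[where f="\<lambda>a b. GQ a b _ _"] arg_cong[where f="\<lambda>x. real_of_int (Jac3 x)"]) simp_all
  have dj: "j2 - 4*j0 = cJ n" "j3 - 4*j1 = cJ (n+1)" "j4 - 4*j2 = cJ (n+2)" "j5 - 4*j3 = cJ (n+3)"
  proof -
    have a: "Jac3 (n+1+2) = Jac3 (n+3)" "Jac3 (n+3+2) = Jac3 (n+2+3)" by (rule arg_cong[where f=Jac3]; simp)+
    show "j2 - 4*j0 = cJ n" using dJ[of n] unfolding j2_def j0_def .
    show "j3 - 4*j1 = cJ (n+1)" using dJ[of "n+1"] unfolding j3_def j1_def a .
    show "j4 - 4*j2 = cJ (n+2)" using dJ[of "n+2"] unfolding j4_def j2_def .
    show "j5 - 4*j3 = cJ (n+3)" using dJ[of "n+3"] unfolding j5_def j3_def a .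
  qed
  define k0 where "k0 = real_of_int (KJac3 n)"
  define k1 where "k1 = real_of_int (KJac3 (n+1))"
  define k2 where "k2 = real_of_int (KJac3 (n+2))"
  define k3 where "k3 = real_of_int (KJac3 (n+3))"
  define k4 where "k4 = real_of_int (KJac3 (n+2+2))"
  define k5 where "k5 = real_of_int (KJac3 (n+2+3))"
  have KGn: "KG n = GQ k0 k1 k2 k3" unfolding KG_def k0_def k1_def k2_def k3_def by (rule refl)
  have KGn2: "KG (n+2) = GQ k2 k3 k4 k5" unfolding KG_def k2_def k3_def k4_def k5_def
    by (intro arg_cong2[where f="\<lambda>a b. GQ a b _ _"] arg_cong[where f="\<lambda>x. real_of_int (KJac3 x)"]) simp_all
  have dk: "k2 - 4*k0 = cK n" "k3 - 4*k1 = cK (n+1)" "k4 - 4*k2 = cK (n+2)" "k5 - 4*k3 = cK (n+3)"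
  proof -
    have a: "KJac3 (n+1+2) = KJac3 (n+3)" "KJac3 (n+3+2) = KJac3 (n+2+3)" by (rule arg_cong[where f=KJac3]; simp)+
    show "k2 - 4*k0 = cK n" using dK[of n] unfolding k2_def k0_def .
    show "k3 - 4*k1 = cK (n+1)" using dK[of "n+1"] unfolding k3_def k1_def a .
    show "k4 - 4*k2 = cK (n+2)" using dK[of "n+2"] unfolding k4_def k2_def .
    show "k5 - 4*k3 = cK (n+3)" using dK[of "n+3"] unfolding k5_def k3_def a .
  qed
  consider "n mod 3 = 0" | "n mod 3 = 1" | "n mod 3 = 2" by fastforce
  then show ?thesis
  proof cases
    case 1
    have m: "(n+1) mod 3 = 1" "(n+2) mod 3 = 2" "(n+3) mod 3 = 0"
      using modk[of n 1] modk[of n 2] modk[of n 3] 1 by simp_all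
    show ?thesis
      using dj dk unfolding JGn JGn2 KGn KGn2 Xs_def gqA_def gqB_def gqC_def gqD_def cJ_def cK_def m 1
      by simp
  next
    case 2
    have m: "(n+1) mod 3 = 2" "(n+2) mod 3 = 0" "(n+3) mod 3 = 1"
      using modk[of n 1] modk[of n 2] modk[of n 3] 2 by simp_all
    show ?thesis
      using dj dk unfolding JGn JGn2 KGn KGn2 Xs_def gqA_def gqB_def gqC_def gqD_def cJ_def cK_def m 2
      by simp
  next
    case 3
    have m: "(n+1) mod 3 = 0" "(n+2) mod 3 = 1" "(n+3) mod 3 = 2"
      using modk[of n 1] modk[of n 2] modk[of n 3] 3 by simp_all
    show ?thesis
      using dj dk unfolding JGn JGn2 KGn KGn2 Xs_def gqA_def gqB_def gqC_def gqD_def cJ_def cK_def m 3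
      by simp
  qed
qed

end
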